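(* Let $\mathcal{A}$ be a deterministic timed automaton (DTA) with reset-clocked language $\mathscr{L}_r(\mathcal{A})$. Then the relation $\sim_{\mathscr{L}_r(\mathcal{A})}$ on reset-clocked words has a finite number of equivalence classes.
   Context: Let $\Sigma$ be a finite alphabet and $\mathcal{C}=\{c_1,\dots,c_m\}$ a finite set of clocks. A clock constraint is a finite conjunction of atomic constraints $c\sim k$ ($c\in\mathcal{C}$, $k\in\mathbb{N}$, ${\sim}\in\{<,\le,=,\ge,>\}$). A timed automaton is $\mathcal{A}=(\Sigma,L,l_0,F,\mathcal{C},\Delta)$ with finite location set $L$, initial $l_0$, accepting $F\subseteq L$, transitions $\Delta\subseteq L\times\Sigma\times\Phi(\mathcal{C})\times2^{\mathcal{C}}\times L$. A run over a delay-timed word $(\sigma_1,t_1)\cdots(\sigma_n,t_n)\in(\Sigma\times\mathbb{R}_{\ge0})^*$ is $(l_0,\nu_0)\xrightarrow{t_1,\sigma_1}\cdots\xrightarrow{t_n,\sigma_n}(l_n,\nu_n)$ with $\nu_0\equiv0$ and transitions $(l_{i-1},\sigma_i,\phi_i,\mathcal{B}_i,l_i)\in\Delta$ with $\nu_{i-1}+t_i$ satisfying $\phi_i$ and $\nu_i$ obtained from $\nu_{i-1}+t_i$ by setting the clocks in $\mathcal{B}_i$ to $0$; accepting if $l_n\in F$. $\mathcal{A}$ is a DTA if every delay-timed word has at most one run. The reset-clocked word of the run is $(\sigma_1,\mathbf{v}_1,\mathbf{b}_1)\cdots(\sigma_n,\mathbf{v}_n,\mathbf{b}_n)$ with $\mathbf{v}_i=\nu_{i-1}+t_i\in\mathbb{R}_{\ge0}^m$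 and $\mathbf{b}_{i,j}=\top$ iff $c_j\in\mathcal{B}_i$ (else $\bot$). $\mathscr{L}_r(\mathcal{A})$ is the set of reset-clocked words of accepting runs. A reset-clocked word (any element of $(\Sigma\times\mathbb{R}_{\ge0}^m\times\{\top,\bot\}^m)^*$) is valid for $\mathcal{A}$ if it is the reset-clocked word of some run. $resets(\cdot)$ returns $\mathbf{b}_1,\dots,\mathbf{b}_n$; $vw(\cdot)$ drops resets. Regions: with $\kappa(c)$ the largest integer in guards of $\mathcal{A}$ over $c$, valuations $\nu,\nu'$ are region-equivalent iff (i) for all $c$, $\lfloor\nu(c)\rfloor=\lfloor\nu'(c)\rfloor$ or both exceed $\kappa(c)$; (ii) for $c$ with $\nu(c)\le\kappa(c)$, $\mathrm{frac}(\nu(c))=0$ iff $\mathrm{frac}(\nu'(c))=0$; (iii) for $c_i,c_j$ with $\nu(c_i)\le\kappa(c_i),\nu(c_j)\le\kappa(c_j)$, $\mathrm{frac}(\nu(c_i))\le\mathrm{frac}(\nu(c_j))$ iff $\mathrm{frac}(\nu'(c_i))\le\mathrm{frac}(\nu'(c_j))$; a region is an equivalence class $\llbracket\nu\rrbracket$. A region word is a finite sequence of pairs $(\sigma,R)$ with $\sigma\in\Sigma$ and $R$ a region; a clocked word $(\sigma_1,\mathbf{v}_1)\cdots(\sigma_n,\mathbf{v}_n)$ maps to $(\sigma_1,\llbracket\mathbf{v}_1\rrbracket)\cdots(\sigma_n,\llbracket\mathbf{v}_n\rrbracket)$. $\mathit{vs}_{\mathcal{A}}(\gamma_r,\xi)$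 is the set of reset-clocked words $\gamma_r'$ with $\llbracket vw(\gamma_r')\rrbracket=\xi$ and $\gamma_r\gamma_r'$ valid for $\mathcal{A}$. Two reset-clocked words satisfy $\gamma_{r1}\sim_{\mathscr{L}_r(\mathcal{A})}\gamma_{r2}$ iff for every region word $\xi$ and all $\gamma_{r1}'\in\mathit{vs}_{\mathcal{A}}(\gamma_{r1},\xi)$, $\gamma_{r2}'\in\mathit{vs}_{\mathcal{A}}(\gamma_{r2},\xi)$: $\gamma_{r1}\gamma_{r1}'\in\mathscr{L}_r(\mathcal{A})$ iff $\gamma_{r2}\gamma_{r2}'\in\mathscr{L}_r(\mathcal{A})$, and $resets(\gamma_{r1}')=resets(\gamma_{r2}')$. *)

theory Defs
  imports Complex_Main
begin

text \<open>Alphabet: a finite type 's; clocks: a finite type 'c (so valuations 'c => real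
  play the role of vectors in R^m, and reset vectors 'c => bool of {T,F}^m).\<close>

datatype cmp = Lt | Le | Eq | Ge | Gt

type_synonym 'c atom = "'c \<times> cmp \<times> nat"
type_synonym 'c constr = "'c atom list"

fun cmp_sat :: "cmp \<Rightarrow> real \<Rightarrow> real \<Rightarrow> bool" where
  "cmp_sat Lt x k = (x < k)"
| "cmp_sat Le x k = (x \<le> k)"
| "cmp_sat Eq x k = (x = k)"
| "cmp_sat Ge x k = (x \<ge> k)"
| "cmp_sat Gt x k = (x > k)"

definition sat :: "('c \<Rightarrow> real) \<Rightarrow> 'c constr \<Rightarrow> bool" where
  "sat v \<phi> = (\<forall>(c, r, k) \<in> set \<phi>. cmp_sat r (v c) (real k))"

type_synonym ('s, 'c, 'l) transition = "'l \<times> 's \<times> 'c constr \<times> 'c set \<times> 'l"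

record ('s, 'c, 'l) ta =
  locs :: "'l set"
  init :: 'l
  acc :: "'l set"
  trans :: "('s, 'c, 'l) transition set"

definition wf_ta :: "('s::finite, 'c::finite, 'l) ta \<Rightarrow> bool" where
  "wf_ta A \<longleftrightarrow> finite (locs A) \<and> init A \<in> locs A \<and> acc A \<subseteq> locs A
     \<and> finite (trans A)
     \<and> (\<forall>(l, \<sigma>, \<phi>, B, l') \<in> trans A. l \<in> locs A \<and> l' \<in> locs A)"

type_synonym ('s, 'c) rcword = "('s \<times> ('c \<Rightarrow> real) \<times> ('c \<Rightarrow> bool)) list"

inductive runp :: "('s, 'c, 'l) ta \<Rightarrow> 'l \<Rightarrow> ('c \<Rightarrow> real) \<Rightarrow> ('s \<times> real) list
    \<Rightarrow> ('s, 'c, 'l) transition list \<Rightarrow> ('s, 'c) rcword \<Rightarrow> 'l \<Rightarrow> bool"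
  for A where
  run_nil: "runp A l \<nu> [] [] [] l"
| run_step: "\<lbrakk> (l, \<sigma>, \<phi>, B, l'') \<in> trans A; t \<ge> 0; v = (\<lambda>c. \<nu> c + t); sat v \<phi>;
     runp A l'' (\<lambda>c. if c \<in> B then 0 else v c) w ts \<gamma> l' \<rbrakk>
   \<Longrightarrow> runp A l \<nu> ((\<sigma>, t) # w) ((l, \<sigma>, \<phi>, B, l'') # ts) ((\<sigma>, v, \<lambda>c. c \<in> B) # \<gamma>) l'"

definition is_DTA :: "('s::finite, 'c::finite, 'l) ta \<Rightarrow> bool" where
  "is_DTA A \<longleftrightarrow> wf_ta A \<and>
     (\<forall>w ts1 ts2 \<gamma>1 \<gamma>2 l1 l2.
        runp A (init A) (\<lambda>_. 0) w ts1 \<gamma>1 l1 \<longrightarrow> runp A (init A) (\<lambda>_. 0) w ts2 \<gamma>2 l2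
        \<longrightarrow> ts1 = ts2 \<and> \<gamma>1 = \<gamma>2 \<and> l1 = l2)"

definition valid_rc :: "('s, 'c, 'l) ta \<Rightarrow> ('s, 'c) rcword \<Rightarrow> bool" where
  "valid_rc A \<gamma> \<longleftrightarrow> (\<exists>w ts l'. runp A (init A) (\<lambda>_. 0) w ts \<gamma> l')"

definition Lr :: "('s, 'c, 'l) ta \<Rightarrow> ('s, 'c) rcword set" where
  "Lr A = {\<gamma>. \<exists>w ts l'. runp A (init A) (\<lambda>_. 0) w ts \<gamma> l' \<and> l' \<in> acc A}"

definition resets :: "('s, 'c) rcword \<Rightarrow> ('c \<Rightarrow> bool) list" where
  "resets \<gamma> = map (\<lambda>(\<sigma>, v, b). b) \<gamma>"

definition vw :: "('s, 'c) rcword \<Rightarrow> ('s \<times> ('c \<Rightarrow> real)) list" where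
  "vw \<gamma> = map (\<lambda>(\<sigma>, v, b). (\<sigma>, v)) \<gamma>"

definition kappa :: "('s, 'c, 'l) ta \<Rightarrow> 'c \<Rightarrow> real" where
  "kappa A c = real (Max ({0} \<union> {k. \<exists>l \<sigma> \<phi> B l' r. (l, \<sigma>, \<phi>, B, l') \<in> trans A
                                  \<and> (c, r, k) \<in> set \<phi>}))"

definition region_cond :: "('s, 'c, 'l) ta \<Rightarrow> ('c \<Rightarrow> real) \<Rightarrow> ('c \<Rightarrow> real) \<Rightarrow> bool" where
  "region_cond A \<nu> \<nu>' \<longleftrightarrow>
     (\<forall>c. \<lfloor>\<nu> c\<rfloor> = \<lfloor>\<nu>' c\<rfloor> \<or> (\<nu> c > kappa A c \<and> \<nu>' c > kappa A c)) \<and>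
     (\<forall>c. \<nu> c \<le> kappa A c \<longrightarrow> (frac (\<nu> c) = 0 \<longleftrightarrow> frac (\<nu>' c) = 0)) \<and>
     (\<forall>ci cj. \<nu> ci \<le> kappa A ci \<and> \<nu> cj \<le> kappa A cj \<longrightarrow>
        (frac (\<nu> ci) \<le> frac (\<nu> cj) \<longleftrightarrow> frac (\<nu>' ci) \<le> frac (\<nu>' cj)))"

definition region_equiv :: "('s, 'c, 'l) ta \<Rightarrow> ('c \<Rightarrow> real) \<Rightarrow> ('c \<Rightarrow> real) \<Rightarrow> bool" where
  "region_equiv A \<nu> \<nu>' \<longleftrightarrow> region_cond A \<nu> \<nu>' \<and> region_cond A \<nu>' \<nu>"

definition region_of :: "('s, 'c, 'l) ta \<Rightarrow> ('c \<Rightarrow> real) \<Rightarrow> ('c \<Rightarrow> real) set" where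
  "region_of A \<nu> = {\<nu>'. region_equiv A \<nu> \<nu>'}"

type_synonym ('s, 'c) region_word = "('s \<times> ('c \<Rightarrow> real) set) list"

definition region_word_of :: "('s, 'c, 'l) ta \<Rightarrow> ('s \<times> ('c \<Rightarrow> real)) list \<Rightarrow> ('s, 'c) region_word" where
  "region_word_of A cw = map (\<lambda>(\<sigma>, v). (\<sigma>, region_of A v)) cw"

definition vs :: "('s, 'c, 'l) ta \<Rightarrow> ('s, 'c) rcword \<Rightarrow> ('s, 'c) region_word \<Rightarrow> ('s, 'c) rcword set" where
  "vs A \<gamma> \<xi> = {\<gamma>'. region_word_of A (vw \<gamma>') = \<xi> \<and> valid_rc A (\<gamma> @ \<gamma>')}"

definition rc_equiv :: "('s, 'c, 'l) ta \<Rightarrow> ('s, 'c) rcword \<Rightarrow> ('s, 'c) rcword \<Rightarrow> bool" where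
  "rc_equiv A \<gamma>1 \<gamma>2 \<longleftrightarrow>
     (\<forall>\<xi>. \<forall>\<gamma>1' \<in> vs A \<gamma>1 \<xi>. \<forall>\<gamma>2' \<in> vs A \<gamma>2 \<xi>.
        (\<gamma>1 @ \<gamma>1' \<in> Lr A \<longleftrightarrow> \<gamma>2 @ \<gamma>2' \<in> Lr A) \<and> resets \<gamma>1' = resets \<gamma>2')"

end

theory Submission
  imports Defs
begin

fun endval :: "('c \<Rightarrow> real) \<Rightarrow> ('s,'c) rcword \<Rightarrow> ('c \<Rightarrow> real)" where
  "endval \<nu> [] = \<nu>"
| "endval \<nu> ((\<sigma>, v, b) # g) = endval (\<lambda>c. if b c then 0 else v c) g"

lemma endval_append: "endval \<nu> (g @ g') = endval (endval \<nu> g) g'"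
  by (induction \<nu> g rule: endval.induct) auto

lemma run_append:
  assumes "runp A l \<nu> w ts g lm" "runp A lm (endval \<nu> g) w' ts' g' l2"
  shows "runp A l \<nu> (w @ w') (ts @ ts') (g @ g') l2"
  using assms
proof (induction rule: runp.induct)
  case (run_nil l \<nu>) thus ?case by simp
next
  case (run_step l \<sigma> \<phi> B l'' t v \<nu> w ts \<gamma> l')
  then show ?case by (auto intro!: runp.run_step)
qed

lemma run_cons_inv:
  assumes "runp A l \<nu> w ts (x # g) l'"
  shows "\<exists>\<sigma> \<phi> B l'' t v w0 ts0. x = (\<sigma>, v, \<lambda>c. c \<in> B) \<and> w = (\<sigma>, t) # w0 \<and>
     ts = (l, \<sigma>, \<phi>, B, l'') # ts0 \<and> (l, \<sigma>, \<phi>, B, l'') \<in> trans A \<and> t \<ge> 0 \<and>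
     v = (\<lambda>c. \<nu> c + t) \<and> sat v \<phi> \<and> runp A l'' (\<lambda>c. if c \<in> B then 0 else v c) w0 ts0 g l'"
  using assms by (cases rule: runp.cases) auto

lemma run_nil_inv: "runp A l \<nu> w ts [] l' \<Longrightarrow> w = [] \<and> ts = [] \<and> l' = l"
  by (cases rule: runp.cases) auto

lemma run_split:
  "runp A l \<nu> w ts (g @ g') l2 \<Longrightarrow> \<exists>w1 w2 ts1 ts2 lm. w = w1 @ w2 \<and> ts = ts1 @ ts2 \<and>
     runp A l \<nu> w1 ts1 g lm \<and> runp A lm (endval \<nu> g) w2 ts2 g' l2"
proof (induction g arbitrary: l \<nu> w ts)
  case Nil show ?case
    apply (rule exI[of _ "[]"], rule exI[of _ w], rule exI[of _ "[]"], rule exI[of _ ts], rule exI[of _ l])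
    using Nil by (auto intro: runp.run_nil)
next
  case (Cons x g)
  from run_cons_inv[OF Cons.prems[unfolded append_Cons]] obtain \<sigma> \<phi> B l'' t v w0 ts0 where
    1: "x = (\<sigma>, v, \<lambda>c. c \<in> B)" "w = (\<sigma>, t) # w0"
     "ts = (l, \<sigma>, \<phi>, B, l'') # ts0" "(l, \<sigma>, \<phi>, B, l'') \<in> trans A" "t \<ge> 0"
     "v = (\<lambda>c. \<nu> c + t)" "sat v \<phi>" "runp A l'' (\<lambda>c. if c \<in> B then 0 else v c) w0 ts0 (g @ g') l2"
    by blast
  from Cons.IH[OF 1(8)] obtain w1 w2 ts1 ts2 lm where
      h: "w0 = w1 @ w2" "ts0 = ts1 @ ts2" "runp A l'' (\<lambda>c. if c \<in> B then 0 else v c) w1 ts1 g lm"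
         "runp A lm (endval (\<lambda>c. if c \<in> B then 0 else v c) g) w2 ts2 g' l2"
      by auto
  show ?case
      apply (rule exI[of _ "(\<sigma>, t) # w1"], rule exI[of _ w2], rule exI[of _ "(l, \<sigma>, \<phi>, B, l'') # ts1"],
             rule exI[of _ ts2], rule exI[of _ lm])
      using 1 h by (auto intro: runp.run_step)
qed

lemma run_w_unique:
  "runp A l \<nu> w ts g l' \<Longrightarrow> runp A l2 \<nu> w2 ts2 g l2' \<Longrightarrow> w = w2"
proof (induction arbitrary: l2 w2 ts2 l2' rule: runp.induct)
  case (run_nil l \<nu>) thus ?case by (auto dest: run_nil_inv)
next
  case (run_step l \<sigma> \<phi> B l'' t v \<nu> w ts \<gamma> l')
  from run_cons_inv[OF run_step.prems] obtain \<sigma>' \<phi>' B' l''' t' v' w0 ts0 where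
    1: "(\<sigma>, v, \<lambda>c. c \<in> B) = (\<sigma>', v', \<lambda>c. c \<in> B')" "w2 = (\<sigma>', t') # w0"
     "v' = (\<lambda>c. \<nu> c + t')" "runp A l''' (\<lambda>c. if c \<in> B' then 0 else v' c) w0 ts0 \<gamma> l2'"
    by blast
  have vv: "v = v'" "(\<lambda>c. c \<in> B) = (\<lambda>c. c \<in> B')" "\<sigma> = \<sigma>'" using 1 by auto
  hence "B = B'" by (metis Collect_mem_eq)
  have "t = t'" using vv(1) 1 run_step.hyps(3) by (metis add_left_cancel)
  have "w = w0"
    using run_step.IH[of l''' w0 ts0 l2'] 1 vv \<open>B = B'\<close> by auto
  then show ?case using 1 \<open>t = t'\<close> vv by auto
qed


lemma kappa_nat: "\<exists>n::nat. kappa A c = real n"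
  unfolding kappa_def by blast

lemma kappa_ge0: "kappa A c \<ge> 0"
  unfolding kappa_def by simp

lemma floor_kappa: "real_of_int \<lfloor>kappa A c\<rfloor> = kappa A c"
  using kappa_nat[of A c] by (metis floor_of_nat of_int_of_nat_eq)

lemma kappa_bound:
  assumes "finite (trans A)" "(l, \<sigma>, \<phi>, B, l') \<in> trans A" "(c, r, k) \<in> set \<phi>"
  shows "real k \<le> kappa A c"
proof -
  let ?S = "{k. \<exists>l \<sigma> \<phi> B l' r. (l, \<sigma>, \<phi>, B, l') \<in> trans A \<and> (c, r, k) \<in> set \<phi>}"
  have "?S \<subseteq> (\<lambda>x. snd (snd x)) ` (\<Union>\<tau>\<in>trans A. set (fst (snd (snd \<tau>))))"
    by force
  moreover have "finite ((\<lambda>x. snd (snd x)) ` (\<Union>\<tau>\<in>trans A. set (fst (snd (snd \<tau>)))))"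
    using assms(1) by auto
  ultimately have "finite ?S" by (rule finite_subset)
  moreover have "k \<in> {0} \<union> ?S" using assms(2,3) by blast
  ultimately have "k \<le> Max ({0} \<union> ?S)" by (intro Max_ge) auto
  thus ?thesis unfolding kappa_def by simp
qed

definition req :: "('s, 'c, 'l) ta \<Rightarrow> ('c \<Rightarrow> real) \<Rightarrow> ('c \<Rightarrow> real) \<Rightarrow> bool" where
  "req A \<nu> \<nu>' \<longleftrightarrow> (\<forall>c. (\<nu> c \<le> kappa A c \<longleftrightarrow> \<nu>' c \<le> kappa A c) \<and>
      (\<nu> c \<le> kappa A c \<longrightarrow> \<lfloor>\<nu> c\<rfloor> = \<lfloor>\<nu>' c\<rfloor> \<and> (frac (\<nu> c) = 0 \<longleftrightarrow> frac (\<nu>' c) = 0))) \<and>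
    (\<forall>c d. \<nu> c \<le> kappa A c \<longrightarrow> \<nu> d \<le> kappa A d \<longrightarrow>
       (frac (\<nu> c) \<le> frac (\<nu> d) \<longleftrightarrow> frac (\<nu>' c) \<le> frac (\<nu>' d)))"

definition rdata :: "('s, 'c, 'l) ta \<Rightarrow> ('c \<Rightarrow> real) \<Rightarrow> ('c \<Rightarrow> int option) \<times> ('c \<Rightarrow> bool) \<times> ('c \<Rightarrow> 'c \<Rightarrow> bool)" where
  "rdata A \<nu> = ((\<lambda>c. if \<nu> c \<le> kappa A c then Some \<lfloor>\<nu> c\<rfloor> else None),
      (\<lambda>c. \<nu> c \<le> kappa A c \<and> frac (\<nu> c) = 0),
      (\<lambda>c d. \<nu> c \<le> kappa A c \<and> \<nu> d \<le> kappa A d \<and> frac (\<nu> c) \<le> frac (\<nu> d)))"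

lemma rdata_eq_iff: "rdata A \<nu> = rdata A \<nu>' \<longleftrightarrow> req A \<nu> \<nu>'"
proof
  assume h: "rdata A \<nu> = rdata A \<nu>'"
  have h1: "\<And>c. (if \<nu> c \<le> kappa A c then Some \<lfloor>\<nu> c\<rfloor> else None) = (if \<nu>' c \<le> kappa A c then Some \<lfloor>\<nu>' c\<rfloor> else None)"
    using h unfolding rdata_def by (simp add: fun_eq_iff)
  have h2: "\<And>c. (\<nu> c \<le> kappa A c \<and> frac (\<nu> c) = 0) = (\<nu>' c \<le> kappa A c \<and> frac (\<nu>' c) = 0)"
    using h unfolding rdata_def by (simp add: fun_eq_iff)
  have h3: "\<And>c d. (\<nu> c \<le> kappa A c \<and> \<nu> d \<le> kappa A d \<and> frac (\<nu> c) \<le> frac (\<nu> d)) =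
      (\<nu>' c \<le> kappa A c \<and> \<nu>' d \<le> kappa A d \<and> frac (\<nu>' c) \<le> frac (\<nu>' d))"
    using h unfolding rdata_def by (simp add: fun_eq_iff)
  have b: "\<And>c. \<nu> c \<le> kappa A c \<longleftrightarrow> \<nu>' c \<le> kappa A c"
    using h1 by (metis option.distinct(1))
  show "req A \<nu> \<nu>'" unfolding req_def
  proof (intro conjI allI impI)
    fix c show "\<nu> c \<le> kappa A c \<longleftrightarrow> \<nu>' c \<le> kappa A c" by (rule b)
  next
    fix c assume "\<nu> c \<le> kappa A c"
    thus "\<lfloor>\<nu> c\<rfloor> = \<lfloor>\<nu>' c\<rfloor>" using h1[of c] b[of c] by auto
  next
    fix c assume "\<nu> c \<le> kappa A c"
    thus "frac (\<nu> c) = 0 \<longleftrightarrow> frac (\<nu>' c) = 0" using h2[of c] b[of c] by auto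
  next
    fix c d assume "\<nu> c \<le> kappa A c" "\<nu> d \<le> kappa A d"
    thus "frac (\<nu> c) \<le> frac (\<nu> d) \<longleftrightarrow> frac (\<nu>' c) \<le> frac (\<nu>' d)"
      using h3[of c d] b[of c] b[of d] by auto
  qed
next
  assume "req A \<nu> \<nu>'"
  thus "rdata A \<nu> = rdata A \<nu>'" unfolding req_def rdata_def
    by (simp add: fun_eq_iff) blast
qed

lemma bounded_pres:
  assumes "region_cond A \<nu> \<nu>'" "region_cond A \<nu>' \<nu>" "\<nu> c \<le> kappa A c"
  shows "\<nu>' c \<le> kappa A c \<and> \<lfloor>\<nu> c\<rfloor> = \<lfloor>\<nu>' c\<rfloor>"
proof -
  have fl: "\<lfloor>\<nu> c\<rfloor> = \<lfloor>\<nu>' c\<rfloor>" using assms unfolding region_cond_def by force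
  moreover have "\<nu>' c \<le> kappa A c"
  proof (rule ccontr)
    assume nb: "\<not> \<nu>' c \<le> kappa A c"
    obtain n :: nat where n: "kappa A c = real n" using kappa_nat[of A c] by blast
    have "\<lfloor>\<nu> c\<rfloor> \<le> int n" using assms(3) n by (simp add: floor_le_iff)
    moreover have "\<lfloor>\<nu>' c\<rfloor> \<ge> int n" using nb n by (simp add: le_floor_iff)
    ultimately have fn: "\<lfloor>\<nu> c\<rfloor> = int n" using fl by simp
    hence "\<nu> c = real n" using assms(3) n
      by (metis floor_eq_iff linorder_not_le of_int_of_nat_eq order_antisym)
    hence "frac (\<nu> c) = 0" by simp
    hence "frac (\<nu>' c) = 0" using assms(1,3) unfolding region_cond_def by blast
    hence "\<nu>' c = real n" using fn fl unfolding frac_def by simp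
    thus False using nb n by simp
  qed
  ultimately show ?thesis by simp
qed

lemma region_equiv_iff: "region_equiv A \<nu> \<nu>' \<longleftrightarrow> req A \<nu> \<nu>'"
proof
  assume h: "region_equiv A \<nu> \<nu>'"
  hence c1: "region_cond A \<nu> \<nu>'" and c2: "region_cond A \<nu>' \<nu>" unfolding region_equiv_def by auto
  have b: "\<And>c. \<nu> c \<le> kappa A c \<longleftrightarrow> \<nu>' c \<le> kappa A c"
    using bounded_pres[OF c1 c2] bounded_pres[OF c2 c1] by blast
  show "req A \<nu> \<nu>'" unfolding req_def
  proof (intro conjI allI impI)
    fix c show "\<nu> c \<le> kappa A c \<longleftrightarrow> \<nu>' c \<le> kappa A c" by (rule b)
  next
    fix c assume "\<nu> c \<le> kappa A c"
    thus "\<lfloor>\<nu> c\<rfloor> = \<lfloor>\<nu>' c\<rfloor>" using bounded_pres[OF c1 c2] by blast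
  next
    fix c assume "\<nu> c \<le> kappa A c"
    thus "frac (\<nu> c) = 0 \<longleftrightarrow> frac (\<nu>' c) = 0" using c1 unfolding region_cond_def by blast
  next
    fix c d assume "\<nu> c \<le> kappa A c" "\<nu> d \<le> kappa A d"
    thus "frac (\<nu> c) \<le> frac (\<nu> d) \<longleftrightarrow> frac (\<nu>' c) \<le> frac (\<nu>' d)"
      using c1 unfolding region_cond_def by blast
  qed
next
  assume h: "req A \<nu> \<nu>'"
  have "region_cond A \<nu> \<nu>'" using h unfolding req_def region_cond_def by (metis not_le)
  moreover have "region_cond A \<nu>' \<nu>" using h unfolding req_def region_cond_def by (metis not_le)
  ultimately show "region_equiv A \<nu> \<nu>'" unfolding region_equiv_def by simp
qed

lemma region_equiv_rdata: "region_equiv A \<nu> \<nu>' \<longleftrightarrow> rdata A \<nu> = rdata A \<nu>'"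
  by (simp add: region_equiv_iff rdata_eq_iff)

lemma region_of_eq_iff: "region_of A v = region_of A v' \<longleftrightarrow> rdata A v = rdata A v'"
  unfolding region_of_def region_equiv_rdata by (auto simp: set_eq_iff)

lemma int_cmp_pres:
  fixes x y :: real
  assumes "\<lfloor>x\<rfloor> = \<lfloor>y\<rfloor>" "frac x = 0 \<longleftrightarrow> frac y = 0"
  shows "(x < real k \<longleftrightarrow> y < real k) \<and> (x = real k \<longleftrightarrow> y = real k) \<and> (x \<le> real k \<longleftrightarrow> y \<le> real k)"
proof -
  have lt: "\<And>z::real. z < real k \<longleftrightarrow> \<lfloor>z\<rfloor> < int k" by (simp add: floor_less_iff)
  have eq: "\<And>z::real. z = real k \<longleftrightarrow> \<lfloor>z\<rfloor> = int k \<and> frac z = 0"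
    unfolding frac_def by (metis diff_self floor_of_nat of_int_of_nat_eq eq_iff_diff_eq_0)
  have 1: "x < real k \<longleftrightarrow> y < real k" using lt assms by simp
  have 2: "x = real k \<longleftrightarrow> y = real k" using eq assms by metis
  show ?thesis using 1 2 by linarith
qed

lemma guard_pres:
  assumes "finite (trans A)" "(l, \<sigma>, \<phi>, B, l') \<in> trans A" "sat v \<phi>" "rdata A v = rdata A v'"
  shows "sat v' \<phi>"
  unfolding sat_def
proof (intro ballI, clarify)
  fix c r k assume a: "(c, r, k) \<in> set \<phi>"
  have kb: "real k \<le> kappa A c" using kappa_bound[OF assms(1,2) a] .
  have s: "cmp_sat r (v c) (real k)" using assms(3) a unfolding sat_def by auto
  have rq: "req A v v'" using assms(4) rdata_eq_iff by blast
  show "cmp_sat r (v' c) (real k)"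
  proof (cases "v c \<le> kappa A c")
    case True
    hence "\<lfloor>v c\<rfloor> = \<lfloor>v' c\<rfloor>" "frac (v c) = 0 \<longleftrightarrow> frac (v' c) = 0" using rq unfolding req_def by auto
    from int_cmp_pres[OF this, of k] s show ?thesis by (cases r) auto
  next
    case False
    hence "v' c > kappa A c" using rq unfolding req_def by auto
    with False s kb show ?thesis by (cases r) auto
  qed
qed

lemma reset_pres:
  assumes "rdata A v = rdata A v'"
  shows "rdata A (\<lambda>c. if c \<in> B then 0 else v c) = rdata A (\<lambda>c. if c \<in> B then 0 else v' c)"
proof -
  have rq: "req A v v'" using assms rdata_eq_iff by blast
  have k0: "\<And>c. 0 \<le> kappa A c" by (rule kappa_ge0)
  have "req A (\<lambda>c. if c \<in> B then 0 else v c) (\<lambda>c. if c \<in> B then 0 else v' c)"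
    unfolding req_def
  proof (intro conjI allI impI)
    fix c
    show "((if c \<in> B then 0 else v c) \<le> kappa A c) = ((if c \<in> B then 0 else v' c) \<le> kappa A c)"
      using rq k0[of c] unfolding req_def by auto
  next
    fix c assume "(if c \<in> B then 0 else v c) \<le> kappa A c"
    thus "\<lfloor>if c \<in> B then 0 else v c\<rfloor> = \<lfloor>if c \<in> B then 0 else v' c\<rfloor>"
      using rq unfolding req_def by auto
  next
    fix c assume "(if c \<in> B then 0 else v c) \<le> kappa A c"
    thus "(frac (if c \<in> B then 0 else v c) = 0) = (frac (if c \<in> B then 0 else v' c) = 0)"
      using rq unfolding req_def by auto
  next
    fix c d assume a: "(if c \<in> B then 0 else v c) \<le> kappa A c" "(if d \<in> B then 0 else v d) \<le> kappa A d"
    have f0: "\<And>x::real. frac x \<le> 0 \<longleftrightarrow> frac x = 0" using frac_ge_0 by (metis order.antisym order.refl)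
    show "(frac (if c \<in> B then 0 else v c) \<le> frac (if d \<in> B then 0 else v d)) =
          (frac (if c \<in> B then 0 else v' c) \<le> frac (if d \<in> B then 0 else v' d))"
      using rq a unfolding req_def by (cases "c \<in> B"; cases "d \<in> B") (simp_all add: f0)
  qed
  thus ?thesis using rdata_eq_iff by blast
qed


lemma interp:
  fixes P :: "(real \<times> real) set"
  assumes fin: "finite P" and ne: "P \<noteq> {}"
    and mono: "\<And>x y x' y'. (x, y) \<in> P \<Longrightarrow> (x', y') \<in> P \<Longrightarrow> (x \<le> x' \<longleftrightarrow> y \<le> y')"
  shows "\<exists>\<psi>::real \<Rightarrow> real. (\<forall>(x, y) \<in> P. \<psi> x = y) \<and> (\<forall>s s'. s < s' \<longrightarrow> \<psi> s < \<psi> s')"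
proof -
  define R where "R = (\<lambda>(p, q). (snd q - snd p) / (fst q - fst p)) ` {(p, q) \<in> P \<times> P. fst p < fst q}"
  have finR: "finite R" unfolding R_def using fin by (auto intro: finite_subset[of _ "P \<times> P"])
  have Rpos: "\<And>r. r \<in> R \<Longrightarrow> r > 0"
  proof -
    fix r assume "r \<in> R"
    then obtain x y x' y' where "(x, y) \<in> P" "(x', y') \<in> P" "x < x'" "r = (y' - y) / (x' - x)"
      unfolding R_def by auto
    moreover have "y < y'" using mono[OF calculation(2,1)] calculation(3) by linarith
    ultimately show "r > 0" by simp
  qed
  define lam where "lam = Min (insert 1 R)"
  have lam_pos: "lam > 0" unfolding lam_def using finR Rpos by (subst Min_gr_iff) auto
  have key: "\<And>x y x' y'. (x, y) \<in> P \<Longrightarrow> (x', y') \<in> P \<Longrightarrow> x \<le> x' \<Longrightarrow> lam * (x' - x) \<le> y' - y"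
  proof -
    fix x y x' y' assume a: "(x, y) \<in> P" "(x', y') \<in> P" "x \<le> x'"
    show "lam * (x' - x) \<le> y' - y"
    proof (cases "x = x'")
      case True
      then have "y = y'" using mono[OF a(1,2)] mono[OF a(2,1)] by auto
      then show ?thesis using True by simp
    next
      case False
      hence lt: "x < x'" using a(3) by simp
      hence "(y' - y) / (x' - x) \<in> R" unfolding R_def using a(1,2)
        by (auto intro!: image_eqI[of _ _ "((x, y), (x', y'))"])
      hence "lam \<le> (y' - y) / (x' - x)" unfolding lam_def using finR by (intro Min_le) auto
      thus ?thesis using lt by (simp add: pos_le_divide_eq)
    qed
  qed
  define g where "g = (\<lambda>(x, y). y - lam * x)"
  define m0 where "m0 = Min (g ` P)"
  define M where "M = (\<lambda>s. Max (insert m0 (g ` {p \<in> P. fst p \<le> s})))"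
  define \<psi> where "\<psi> = (\<lambda>s. lam * s + M s)"
  have finS: "\<And>s. finite (insert m0 (g ` {p \<in> P. fst p \<le> s}))" using fin by auto
  have Mmono: "\<And>s s'. s \<le> s' \<Longrightarrow> M s \<le> M s'"
    unfolding M_def using finS by (intro Max_mono) auto
  have Mpt: "\<And>x y. (x, y) \<in> P \<Longrightarrow> M x = y - lam * x"
  proof -
    fix x y assume a: "(x, y) \<in> P"
    show "M x = y - lam * x" unfolding M_def
    proof (rule Max_eqI[OF finS])
      show "y - lam * x \<in> insert m0 (g ` {p \<in> P. fst p \<le> x})"
        using a unfolding g_def by (auto intro!: image_eqI[of _ _ "(x, y)"])
    next
      fix z assume "z \<in> insert m0 (g ` {p \<in> P. fst p \<le> x})"
      then show "z \<le> y - lam * x"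
      proof
        assume "z = m0"
        have "m0 \<le> g (x, y)" unfolding m0_def using fin a by (intro Min_le) auto
        thus ?thesis using \<open>z = m0\<close> unfolding g_def by simp
      next
        assume "z \<in> g ` {p \<in> P. fst p \<le> x}"
        then obtain x'' y'' where "(x'', y'') \<in> P" "x'' \<le> x" "z = y'' - lam * x''"
          unfolding g_def by auto
        with key[OF this(1) a this(2)] show ?thesis by (simp add: algebra_simps)
      qed
    qed
  qed
  have "\<forall>(x, y) \<in> P. \<psi> x = y" unfolding \<psi>_def using Mpt by auto
  moreover have "\<forall>s s'. s < s' \<longrightarrow> \<psi> s < \<psi> s'"
    unfolding \<psi>_def using Mmono lam_pos
    by (metis add_less_le_mono less_eq_real_def mult_strict_left_mono)
  ultimately show ?thesis by blast
qed

lemma shift_transfer: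
  fixes \<phi> :: "real \<Rightarrow> real"
  assumes mono: "\<And>a b. a < b \<Longrightarrow> \<phi> a < \<phi> b"
    and sh: "\<And>a k. \<phi> (a + of_int k) = \<phi> a + of_int k"
  shows "\<lfloor>\<phi> x - \<phi> y\<rfloor> = \<lfloor>x - y\<rfloor>"
    and "frac (\<phi> x - \<phi> y) = 0 \<longleftrightarrow> frac (x - y) = 0"
    and "frac (\<phi> x - \<phi> y) \<le> frac (\<phi> z - \<phi> y) \<longleftrightarrow> frac (x - y) \<le> frac (z - y)"
proof -
  have le: "\<And>a b. a \<le> b \<longleftrightarrow> \<phi> a \<le> \<phi> b"
  proof -
    fix a b :: real
    show "a \<le> b \<longleftrightarrow> \<phi> a \<le> \<phi> b"
      using mono[of a b] mono[of b a] by (cases a b rule: linorder_cases) auto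
  qed
  have eq: "\<And>a b. a = b \<longleftrightarrow> \<phi> a = \<phi> b" using le by (metis order.antisym order.refl)
  have fl: "\<And>x y. \<lfloor>\<phi> x - \<phi> y\<rfloor> = \<lfloor>x - y\<rfloor>"
  proof -
    fix x y :: real
    define m where "m = \<lfloor>x - y\<rfloor>"
    have "y + of_int m \<le> x" "x < y + of_int (m + 1)" unfolding m_def by linarith+
    moreover have "\<phi> (y + of_int (m+1)) = \<phi> y + of_int (m+1)" "\<phi> (y + of_int m) = \<phi> y + of_int m" by (rule sh)+
    ultimately have "\<phi> y + of_int m \<le> \<phi> x" "\<phi> x < \<phi> y + of_int (m + 1)"
      using le[of "y + of_int m" x] mono[of x "y + of_int (m+1)"] by (simp_all del: of_int_add)
    thus "\<lfloor>\<phi> x - \<phi> y\<rfloor> = \<lfloor>x - y\<rfloor>" unfolding m_def[symmetric] by (intro floor_unique) auto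
  qed
  show "\<lfloor>\<phi> x - \<phi> y\<rfloor> = \<lfloor>x - y\<rfloor>" by (rule fl)
  define m where "m = \<lfloor>x - y\<rfloor>"
  have "frac (x - y) = 0 \<longleftrightarrow> x = y + of_int m" unfolding frac_def m_def by linarith
  moreover have "frac (\<phi> x - \<phi> y) = 0 \<longleftrightarrow> \<phi> x = \<phi> y + of_int m" unfolding frac_def m_def fl by linarith
  moreover have "x = y + of_int m \<longleftrightarrow> \<phi> x = \<phi> y + of_int m" using eq sh by metis
  ultimately show "frac (\<phi> x - \<phi> y) = 0 \<longleftrightarrow> frac (x - y) = 0" by blast
  define m2 where "m2 = \<lfloor>z - y\<rfloor>"
  have "frac (x - y) \<le> frac (z - y) \<longleftrightarrow> x \<le> z + of_int (m - m2)" unfolding frac_def m_def m2_def by (simp; linarith)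
  moreover have "frac (\<phi> x - \<phi> y) \<le> frac (\<phi> z - \<phi> y) \<longleftrightarrow> \<phi> x \<le> \<phi> z + of_int (m - m2)"
    unfolding frac_def m_def m2_def fl by (simp; linarith)
  moreover have "x \<le> z + of_int (m - m2) \<longleftrightarrow> \<phi> x \<le> \<phi> z + of_int (m - m2)" using le sh by metis
  ultimately show "frac (\<phi> x - \<phi> y) \<le> frac (\<phi> z - \<phi> y) \<longleftrightarrow> frac (x - y) \<le> frac (z - y)" by blast
qed

lemma circ_extend:
  fixes \<psi> :: "real \<Rightarrow> real"
  assumes mono: "\<And>s s'. s < s' \<Longrightarrow> \<psi> s < \<psi> s'" and p0: "\<psi> 0 = 0" and p1: "\<psi> 1 = 1"
  defines "\<phi> \<equiv> \<lambda>x. of_int \<lfloor>x\<rfloor> + \<psi> (frac x)"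
  shows "\<And>a b. a < b \<Longrightarrow> \<phi> a < \<phi> b" and "\<And>a k. \<phi> (a + of_int k) = \<phi> a + of_int k"
proof -
  have rng: "\<And>x. 0 \<le> \<psi> (frac x) \<and> \<psi> (frac x) < 1"
  proof -
    fix x
    have "\<psi> 0 \<le> \<psi> (frac x)"
    proof (cases "frac x = 0")
      case True thus ?thesis by (metis order_refl)
    next
      case False thus ?thesis using mono[of 0 "frac x"] frac_ge_0[of x] by simp
    qed
    moreover have "\<psi> (frac x) < \<psi> 1" using mono frac_lt_1 by blast
    ultimately show "0 \<le> \<psi> (frac x) \<and> \<psi> (frac x) < 1" using p0 p1 by simp
  qed
  fix a b :: real assume ab: "a < b"
  show "\<phi> a < \<phi> b"
  proof (cases "\<lfloor>a\<rfloor> = \<lfloor>b\<rfloor>")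
    case True
    hence "frac a < frac b" using ab unfolding frac_def by simp
    thus ?thesis unfolding \<phi>_def using True mono by simp
  next
    case False
    hence "\<lfloor>a\<rfloor> + 1 \<le> \<lfloor>b\<rfloor>" using ab by (meson floor_mono less_eq_real_def order_le_neq_trans zless_imp_add1_zle)
    hence "of_int \<lfloor>a\<rfloor> + 1 \<le> (of_int \<lfloor>b\<rfloor> :: real)" by linarith
    thus ?thesis unfolding \<phi>_def using rng[of a] rng[of b] by linarith
  qed
next
  fix a :: real and k :: int
  show "\<phi> (a + of_int k) = \<phi> a + of_int k" unfolding \<phi>_def by simp
qed


lemma delay_pres:
  fixes A :: "('s, 'c::finite, 'l) ta"
  assumes "rdata A \<mu>1 = rdata A \<mu>2" "t \<ge> 0"
  shows "\<exists>t' \<ge> 0. rdata A (\<lambda>c. \<mu>1 c + t) = rdata A (\<lambda>c. \<mu>2 c + t')"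
proof -
  have rq: "req A \<mu>1 \<mu>2" using assms(1) rdata_eq_iff by blast
  define C where "C = {c. \<mu>1 c \<le> kappa A c}"
  have b: "\<And>c. \<mu>1 c \<le> kappa A c \<longleftrightarrow> \<mu>2 c \<le> kappa A c" using rq unfolding req_def by blast
  have fl: "\<And>c. c \<in> C \<Longrightarrow> \<lfloor>\<mu>1 c\<rfloor> = \<lfloor>\<mu>2 c\<rfloor>" using rq unfolding req_def C_def by blast
  have f0: "\<And>c. c \<in> C \<Longrightarrow> frac (\<mu>1 c) = 0 \<longleftrightarrow> frac (\<mu>2 c) = 0" using rq unfolding req_def C_def by blast
  have fc: "\<And>c d. c \<in> C \<Longrightarrow> d \<in> C \<Longrightarrow> frac (\<mu>1 c) \<le> frac (\<mu>1 d) \<longleftrightarrow> frac (\<mu>2 c) \<le> frac (\<mu>2 d)"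
    using rq unfolding req_def C_def by blast
  define P where "P = insert (0::real, 0::real) (insert (1, 1) ((\<lambda>c. (frac (\<mu>1 c), frac (\<mu>2 c))) ` C))"
  have finP: "finite P" unfolding P_def by simp
  have fle0: "\<And>x::real. frac x \<le> 0 \<longleftrightarrow> frac x = 0" using frac_ge_0 by (metis order.antisym order.refl)
  have f1: "\<And>x::real. \<not> 1 \<le> frac x" using frac_lt_1 by (metis not_le)
  have f1': "\<And>x::real. frac x \<le> 1" using frac_lt_1 less_imp_le by blast
  have monoP: "\<And>x y x' y'. (x, y) \<in> P \<Longrightarrow> (x', y') \<in> P \<Longrightarrow> (x \<le> x' \<longleftrightarrow> y \<le> y')"
  proof -
    fix x y x' y' assume a: "(x, y) \<in> P" "(x', y') \<in> P"
    have cs: "\<And>x y. (x, y) \<in> P \<Longrightarrow> (x = 0 \<and> y = 0) \<or> (x = 1 \<and> y = 1) \<or> (\<exists>c \<in> C. x = frac (\<mu>1 c) \<and> y = frac (\<mu>2 c))"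
      unfolding P_def by auto
    show "x \<le> x' \<longleftrightarrow> y \<le> y'"
      using cs[OF a(1)] cs[OF a(2)]
    proof (elim disjE conjE bexE)
    qed (simp_all del: frac_eq_0_iff add: fle0 f1 f1' f0 fc)
  qed
  have neP: "P \<noteq> {}" unfolding P_def by simp
  obtain \<psi> where psiP0: "\<forall>(x, y) \<in> P. \<psi> x = y" and psim: "\<forall>s s'. s < s' \<longrightarrow> \<psi> s < \<psi> s'"
    using interp[OF finP neP monoP] by blast
  have psiP: "\<And>x y. (x, y) \<in> P \<Longrightarrow> \<psi> x = y" using psiP0 by auto
  have p0: "\<psi> 0 = 0" by (rule psiP) (simp add: P_def)
  have p1: "\<psi> 1 = 1" by (rule psiP) (simp add: P_def)
  have pc: "\<And>c. c \<in> C \<Longrightarrow> \<psi> (frac (\<mu>1 c)) = frac (\<mu>2 c)" by (rule psiP) (simp add: P_def)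
  define \<phi> where "\<phi> = (\<lambda>x. of_int \<lfloor>x\<rfloor> + \<psi> (frac x))"
  have psim': "\<And>s s'. s < s' \<Longrightarrow> \<psi> s < \<psi> s'" using psim by blast
  have phim: "\<And>a b. a < b \<Longrightarrow> \<phi> a < \<phi> b"
    using circ_extend(1)[OF psim' p0 p1] unfolding \<phi>_def by simp
  have phis: "\<And>a k. \<phi> (a + of_int k) = \<phi> a + of_int k"
    using circ_extend(2)[OF psim' p0 p1] unfolding \<phi>_def by simp
  have phic: "\<And>c. c \<in> C \<Longrightarrow> \<phi> (\<mu>1 c) = \<mu>2 c"
    unfolding \<phi>_def using fl pc unfolding frac_def by simp
  have phi0: "\<phi> 0 = 0" unfolding \<phi>_def using p0 by simp
  define t' where "t' = - \<phi> (- t)"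
  have t'pos: "t' \<ge> 0"
  proof (cases "t = 0")
    case True thus ?thesis unfolding t'_def using phi0 by simp
  next
    case False thus ?thesis unfolding t'_def using phim[of "-t" 0] phi0 assms(2) by simp
  qed
  have e1: "\<And>c. \<mu>1 c + t = \<mu>1 c - (- t)" by simp
  have e2: "\<And>c. c \<in> C \<Longrightarrow> \<mu>2 c + t' = \<phi> (\<mu>1 c) - \<phi> (- t)" unfolding t'_def using phic by simp
  have T1: "\<And>c. c \<in> C \<Longrightarrow> \<lfloor>\<mu>1 c + t\<rfloor> = \<lfloor>\<mu>2 c + t'\<rfloor>"
    using shift_transfer(1)[OF phim phis] e2 by (metis e1)
  have T2: "\<And>c. c \<in> C \<Longrightarrow> frac (\<mu>1 c + t) = 0 \<longleftrightarrow> frac (\<mu>2 c + t') = 0"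
    using shift_transfer(2)[OF phim phis] e2 by (metis e1)
  have T3: "\<And>c d. c \<in> C \<Longrightarrow> d \<in> C \<Longrightarrow> frac (\<mu>1 c + t) \<le> frac (\<mu>1 d + t) \<longleftrightarrow> frac (\<mu>2 c + t') \<le> frac (\<mu>2 d + t')"
    using shift_transfer(3)[OF phim phis] e2 by (metis e1)
  have Bd: "\<And>c. \<mu>1 c + t \<le> kappa A c \<longleftrightarrow> \<mu>2 c + t' \<le> kappa A c"
  proof -
    fix c
    obtain n :: nat where n: "kappa A c = real n" using kappa_nat[of A c] by blast
    show "\<mu>1 c + t \<le> kappa A c \<longleftrightarrow> \<mu>2 c + t' \<le> kappa A c"
    proof (cases "c \<in> C")
      case True
      from int_cmp_pres[OF T1[OF True] T2[OF True], of n] show ?thesis using n by simp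
    next
      case False
      hence n1: "\<not> \<mu>1 c \<le> kappa A c" unfolding C_def by simp
      hence "\<not> \<mu>2 c \<le> kappa A c" using b[of c] by simp
      hence "\<mu>1 c > kappa A c" "\<mu>2 c > kappa A c" using n1 by simp_all
      thus ?thesis using assms(2) t'pos by auto
    qed
  qed
  have inC: "\<And>c. \<mu>1 c + t \<le> kappa A c \<Longrightarrow> c \<in> C" unfolding C_def using assms(2) by auto
  have "req A (\<lambda>c. \<mu>1 c + t) (\<lambda>c. \<mu>2 c + t')"
    unfolding req_def using Bd inC T1 T2 T3 by blast
  thus ?thesis using t'pos rdata_eq_iff by blast
qed


lemma dta_det:
  assumes "is_DTA A" "runp A (init A) (\<lambda>_. 0) w ts1 g1 l1" "runp A (init A) (\<lambda>_. 0) w ts2 g2 l2"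
  shows "ts1 = ts2 \<and> g1 = g2 \<and> l1 = l2"
  using assms unfolding is_DTA_def by blast

lemma endloc_unique:
  assumes "is_DTA A" "runp A (init A) (\<lambda>_. 0) w1 ts1 g l1" "runp A (init A) (\<lambda>_. 0) w2 ts2 g l2"
  shows "l1 = l2"
proof -
  have "w1 = w2" using run_w_unique[OF assms(2,3)] .
  thus ?thesis using dta_det[OF assms(1,2)] assms(3) by blast
qed

definition endloc :: "('s::finite, 'c::finite, 'l) ta \<Rightarrow> ('s, 'c) rcword \<Rightarrow> 'l" where
  "endloc A g = (THE l. \<exists>w ts. runp A (init A) (\<lambda>_. 0) w ts g l)"

lemma endloc_eq:
  assumes "is_DTA A" "runp A (init A) (\<lambda>_. 0) w ts g l"
  shows "endloc A g = l"
  unfolding endloc_def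
proof (rule the_equality)
  show "\<exists>w ts. runp A (init A) (\<lambda>_. 0) w ts g l" using assms(2) by blast
next
  fix l' assume "\<exists>w ts. runp A (init A) (\<lambda>_. 0) w ts g l'"
  then obtain w' ts' where "runp A (init A) (\<lambda>_. 0) w' ts' g l'" by blast
  thus "l' = l" using endloc_unique[OF assms(1)] assms(2) by blast
qed

lemma rw_cons: "region_word_of A (vw ((\<sigma>, v, b) # g)) = (\<sigma>, region_of A v) # region_word_of A (vw g)"
  unfolding region_word_of_def vw_def by simp

lemma rw_nil_iff: "region_word_of A (vw g) = [] \<longleftrightarrow> g = []"
  unfolding region_word_of_def vw_def by simp

lemma sim:
  fixes A :: "('s, 'c::finite, 'l) ta"
  assumes "runp A l \<mu>1 w ts a l'" "finite (trans A)" "rdata A \<mu>1 = rdata A \<mu>2"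
  shows "\<exists>w2 ts2 b l2. runp A l \<mu>2 w2 ts2 b l2 \<and> region_word_of A (vw a) = region_word_of A (vw b)"
  using assms
proof (induction arbitrary: \<mu>2 rule: runp.induct)
  case (run_nil l \<nu>)
  show ?case by (rule exI[of _ "[]"], rule exI[of _ "[]"], rule exI[of _ "[]"], rule exI[of _ l])
      (simp add: runp.run_nil)
next
  case (run_step l \<sigma> \<phi> B l'' t v \<nu> w ts \<gamma> l')
  obtain t' where t': "t' \<ge> 0" "rdata A (\<lambda>c. \<nu> c + t) = rdata A (\<lambda>c. \<mu>2 c + t')"
    using delay_pres[OF run_step.prems(2) run_step.hyps(2)] by blast
  define v' where "v' = (\<lambda>c. \<mu>2 c + t')"
  have rv: "rdata A v = rdata A v'" using t' run_step.hyps(3) unfolding v'_def by simp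
  have sv: "sat v' \<phi>" using guard_pres[OF run_step.prems(1) run_step.hyps(1,4) rv] .
  have rr: "rdata A (\<lambda>c. if c \<in> B then 0 else v c) = rdata A (\<lambda>c. if c \<in> B then 0 else v' c)"
    using reset_pres[OF rv] .
  obtain w2 ts2 b l2 where ih: "runp A l'' (\<lambda>c. if c \<in> B then 0 else v' c) w2 ts2 b l2"
    "region_word_of A (vw \<gamma>) = region_word_of A (vw b)"
    using run_step.IH[OF run_step.prems(1) rr] by blast
  have "runp A l \<mu>2 ((\<sigma>, t') # w2) ((l, \<sigma>, \<phi>, B, l'') # ts2) ((\<sigma>, v', \<lambda>c. c \<in> B) # b) l2"
    by (rule runp.run_step[OF run_step.hyps(1) t'(1) v'_def sv ih(1)])
  moreover have "region_word_of A (vw ((\<sigma>, v, \<lambda>c. c \<in> B) # \<gamma>)) = region_word_of A (vw ((\<sigma>, v', \<lambda>c. c \<in> B) # b))"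
    unfolding rw_cons using ih(2) rv region_of_eq_iff by metis
  ultimately show ?case by blast
qed

lemma step_run:
  assumes "(l, \<sigma>, \<phi>, B, l'') \<in> trans A" "t \<ge> 0" "sat (\<lambda>c. \<nu> c + t) \<phi>"
  shows "runp A l \<nu> [(\<sigma>, t)] [(l, \<sigma>, \<phi>, B, l'')] [(\<sigma>, (\<lambda>c. \<nu> c + t), \<lambda>c. c \<in> B)] l''"
  by (rule runp.run_step[OF assms(1,2) refl assms(3) runp.run_nil])

lemma det:
  fixes A :: "('s::finite, 'c::finite, 'l) ta"
  assumes "runp A l \<mu>1 w1' ts1' a1 l1'"
    and "is_DTA A"
    and "runp A (init A) (\<lambda>_. 0) w1 ts1 g1 l" "\<mu>1 = endval (\<lambda>_. 0) g1"
    and "runp A (init A) (\<lambda>_. 0) w2 ts2 g2 l"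
    and "runp A l (endval (\<lambda>_. 0) g2) w2' ts2' a2 l2'"
    and "region_word_of A (vw a1) = region_word_of A (vw a2)"
  shows "resets a1 = resets a2 \<and> l1' = l2'"
  using assms
proof (induction arbitrary: w1 ts1 g1 w2 ts2 g2 w2' ts2' a2 l2' rule: runp.induct)
  case (run_nil l \<nu>)
  hence "a2 = []" using rw_nil_iff by metis
  thus ?case using run_nil.prems(5) run_nil_inv by (metis)
next
  case (run_step l \<sigma> \<phi> B l'' t v \<nu> w ts \<gamma> l')
  have finT: "finite (trans A)" using run_step.prems(1) unfolding is_DTA_def wf_ta_def by blast
  obtain x a2r where a2: "a2 = x # a2r"
    using run_step.prems(6) rw_nil_iff by (metis list.exhaust list.distinct(1) rw_cons prod_cases3)
  obtain \<sigma>2 \<phi>2 B2 l2'' t2 v2 w0 ts0 where 2: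
    "x = (\<sigma>2, v2, \<lambda>c. c \<in> B2)" "w2' = (\<sigma>2, t2) # w0"
     "ts2' = (l, \<sigma>2, \<phi>2, B2, l2'') # ts0" "(l, \<sigma>2, \<phi>2, B2, l2'') \<in> trans A" "t2 \<ge> 0"
     "v2 = (\<lambda>c. endval (\<lambda>_. 0) g2 c + t2)" "sat v2 \<phi>2"
     "runp A l2'' (\<lambda>c. if c \<in> B2 then 0 else v2 c) w0 ts0 a2r l2'"
    using run_cons_inv[OF run_step.prems(5)[unfolded a2]] by blast
  have rw: "(\<sigma>, region_of A v) = (\<sigma>2, region_of A v2)"
    "region_word_of A (vw \<gamma>) = region_word_of A (vw a2r)"
    using run_step.prems(6) unfolding a2 2(1) rw_cons by auto
  hence s2: "\<sigma>2 = \<sigma>" and rv: "rdata A v = rdata A v2" using region_of_eq_iff by auto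
  have sat2: "sat v2 \<phi>" using guard_pres[OF finT run_step.hyps(1,4) rv] .
  have R1: "runp A (init A) (\<lambda>_. 0) (w2 @ [(\<sigma>, t2)]) (ts2 @ [(l, \<sigma>, \<phi>, B, l'')])
      (g2 @ [(\<sigma>, v2, \<lambda>c. c \<in> B)]) l''"
    using run_append[OF run_step.prems(4) step_run[OF run_step.hyps(1) 2(5), of "endval (\<lambda>_. 0) g2"]]
      sat2 2(6) by simp
  have R2: "runp A (init A) (\<lambda>_. 0) (w2 @ [(\<sigma>, t2)]) (ts2 @ [(l, \<sigma>2, \<phi>2, B2, l2'')])
      (g2 @ [(\<sigma>, v2, \<lambda>c. c \<in> B2)]) l2''"
    using run_append[OF run_step.prems(4) step_run[OF 2(4,5), of "endval (\<lambda>_. 0) g2"]]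
      2(6,7) s2 by simp
  have "ts2 @ [(l, \<sigma>, \<phi>, B, l'')] = ts2 @ [(l, \<sigma>2, \<phi>2, B2, l2'')]"
    using dta_det[OF run_step.prems(1) R1 R2] by blast
  hence eqs: "B2 = B" "l2'' = l''" by auto
  have G1: "runp A (init A) (\<lambda>_. 0) (w1 @ [(\<sigma>, t)]) (ts1 @ [(l, \<sigma>, \<phi>, B, l'')])
      (g1 @ [(\<sigma>, v, \<lambda>c. c \<in> B)]) l''"
    using run_append[OF run_step.prems(2) step_run[OF run_step.hyps(1,2), of "endval (\<lambda>_. 0) g1"]]
      run_step.hyps(3,4) run_step.prems(3) by simp
  have E1: "(\<lambda>c. if c \<in> B then 0 else v c) = endval (\<lambda>_. 0) (g1 @ [(\<sigma>, v, \<lambda>c. c \<in> B)])"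
    by (simp add: endval_append)
  have E2: "endval (\<lambda>_. 0) (g2 @ [(\<sigma>, v2, \<lambda>c. c \<in> B)]) = (\<lambda>c. if c \<in> B2 then 0 else v2 c)"
    using eqs by (simp add: endval_append)
  have rest: "runp A l'' (endval (\<lambda>_. 0) (g2 @ [(\<sigma>, v2, \<lambda>c. c \<in> B)])) w0 ts0 a2r l2'"
    using 2(8) E2 eqs by simp
  have "resets \<gamma> = resets a2r \<and> l' = l2'"
    using run_step.IH[OF run_step.prems(1) G1 E1 R1 rest rw(2)] .
  thus ?case unfolding a2 2(1) resets_def using eqs by simp
qed


lemma vs_char:
  assumes "is_DTA A" "runp A (init A) (\<lambda>_. 0) w ts g l"
  shows "a \<in> vs A g \<xi> \<longleftrightarrow> region_word_of A (vw a) = \<xi> \<and> (\<exists>w' ts' l'. runp A l (endval (\<lambda>_. 0) g) w' ts' a l')"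
proof
  assume "a \<in> vs A g \<xi>"
  then obtain W TS L where r: "runp A (init A) (\<lambda>_. 0) W TS (g @ a) L" and rw: "region_word_of A (vw a) = \<xi>"
    unfolding vs_def valid_rc_def by blast
  from run_split[OF r] obtain w1 w2 ts1 ts2 lm where
    s: "runp A (init A) (\<lambda>_. 0) w1 ts1 g lm" "runp A lm (endval (\<lambda>_. 0) g) w2 ts2 a L" by blast
  have "lm = l" using endloc_unique[OF assms(1) s(1) assms(2)] .
  thus "region_word_of A (vw a) = \<xi> \<and> (\<exists>w' ts' l'. runp A l (endval (\<lambda>_. 0) g) w' ts' a l')"
    using s(2) rw by blast
next
  assume "region_word_of A (vw a) = \<xi> \<and> (\<exists>w' ts' l'. runp A l (endval (\<lambda>_. 0) g) w' ts' a l')"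
  then obtain w' ts' l' where "region_word_of A (vw a) = \<xi>" "runp A l (endval (\<lambda>_. 0) g) w' ts' a l'" by blast
  thus "a \<in> vs A g \<xi>" unfolding vs_def valid_rc_def using run_append[OF assms(2)] by blast
qed

lemma Lr_char:
  assumes "is_DTA A" "runp A (init A) (\<lambda>_. 0) w ts g l" "runp A l (endval (\<lambda>_. 0) g) w' ts' a l'"
  shows "g @ a \<in> Lr A \<longleftrightarrow> l' \<in> acc A"
proof -
  have r: "runp A (init A) (\<lambda>_. 0) (w @ w') (ts @ ts') (g @ a) l'" using run_append[OF assms(2,3)] .
  show ?thesis
  proof
    assume "g @ a \<in> Lr A"
    then obtain W TS L where "runp A (init A) (\<lambda>_. 0) W TS (g @ a) L" "L \<in> acc A" unfolding Lr_def by blast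
    thus "l' \<in> acc A" using endloc_unique[OF assms(1) r] by metis
  next
    assume "l' \<in> acc A" thus "g @ a \<in> Lr A" unfolding Lr_def using r by blast
  qed
qed

lemma vs_invalid:
  assumes "\<not> valid_rc A g" shows "vs A g \<xi> = {}"
proof (rule ccontr)
  assume "vs A g \<xi> \<noteq> {}"
  then obtain a W TS L where "runp A (init A) (\<lambda>_. 0) W TS (g @ a) L" unfolding vs_def valid_rc_def by blast
  from run_split[OF this] have "valid_rc A g" unfolding valid_rc_def by blast
  thus False using assms by blast
qed

lemma compat:
  fixes A :: "('s::finite, 'c::finite, 'l) ta"
  assumes dta: "is_DTA A" and r1: "runp A (init A) (\<lambda>_. 0) w1 ts1 g1 l" and r2: "runp A (init A) (\<lambda>_. 0) w2 ts2 g2 l"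
    and rd: "rdata A (endval (\<lambda>_. 0) g1) = rdata A (endval (\<lambda>_. 0) g2)"
  shows "(vs A g1 \<xi> = {} \<longleftrightarrow> vs A g2 \<xi> = {}) \<and>
    (\<forall>a \<in> vs A g1 \<xi>. \<forall>b \<in> vs A g2 \<xi>. (g1 @ a \<in> Lr A \<longleftrightarrow> g2 @ b \<in> Lr A) \<and> resets a = resets b)"
proof (rule conjI)
  have finT: "finite (trans A)" using dta unfolding is_DTA_def wf_ta_def by blast
  have one: "vs A h2 \<xi> \<noteq> {}" if q: "vs A h1 \<xi> \<noteq> {}" "runp A (init A) (\<lambda>_. 0) u1 us1 h1 l"
      "runp A (init A) (\<lambda>_. 0) u2 us2 h2 l" "rdata A (endval (\<lambda>_. 0) h1) = rdata A (endval (\<lambda>_. 0) h2)"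
    for h1 h2 u1 u2 us1 us2
  proof -
    obtain a where "a \<in> vs A h1 \<xi>" using q(1) by blast
    then obtain w' ts' l' where a: "region_word_of A (vw a) = \<xi>" "runp A l (endval (\<lambda>_. 0) h1) w' ts' a l'"
      using vs_char[OF dta q(2)] by blast
    obtain w'' ts'' b l'' where "runp A l (endval (\<lambda>_. 0) h2) w'' ts'' b l''"
      "region_word_of A (vw a) = region_word_of A (vw b)"
      using sim[OF a(2) finT q(4)] by blast
    hence "b \<in> vs A h2 \<xi>" using vs_char[OF dta q(3)] a(1) by metis
    thus ?thesis by blast
  qed
  show "vs A g1 \<xi> = {} \<longleftrightarrow> vs A g2 \<xi> = {}"
    using one[OF _ r1 r2 rd] one[OF _ r2 r1 rd[symmetric]] by blast
next
  show "\<forall>a \<in> vs A g1 \<xi>. \<forall>b \<in> vs A g2 \<xi>. (g1 @ a \<in> Lr A \<longleftrightarrow> g2 @ b \<in> Lr A) \<and> resets a = resets b"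
  proof (intro ballI)
  fix a b assume a: "a \<in> vs A g1 \<xi>" and b: "b \<in> vs A g2 \<xi>"
  obtain w' ts' l1' where ra: "region_word_of A (vw a) = \<xi>" "runp A l (endval (\<lambda>_. 0) g1) w' ts' a l1'"
    using vs_char[OF dta r1] a by blast
  obtain w'' ts'' l2' where rb: "region_word_of A (vw b) = \<xi>" "runp A l (endval (\<lambda>_. 0) g2) w'' ts'' b l2'"
    using vs_char[OF dta r2] b by blast
  have d: "resets a = resets b \<and> l1' = l2'"
    using det[OF ra(2) dta r1 refl r2 rb(2)] ra(1) rb(1) by simp
  have "g1 @ a \<in> Lr A \<longleftrightarrow> l1' \<in> acc A" using Lr_char[OF dta r1 ra(2)] .
  moreover have "g2 @ b \<in> Lr A \<longleftrightarrow> l2' \<in> acc A" using Lr_char[OF dta r2 rb(2)] .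
  ultimately show "(g1 @ a \<in> Lr A \<longleftrightarrow> g2 @ b \<in> Lr A) \<and> resets a = resets b" using d by simp
  qed
qed

definition key :: "('s::finite, 'c::finite, 'l) ta \<Rightarrow> ('s, 'c) rcword \<Rightarrow> ('l \<times> (('c \<Rightarrow> int option) \<times> ('c \<Rightarrow> bool) \<times> ('c \<Rightarrow> 'c \<Rightarrow> bool))) option" where
  "key A g = (if valid_rc A g then Some (endloc A g, rdata A (endval (\<lambda>_. 0) g)) else None)"

lemma rc_transfer:
  assumes "\<And>\<xi>. (vs A g1 \<xi> = {} \<longleftrightarrow> vs A g2 \<xi> = {}) \<and>
    (\<forall>a \<in> vs A g1 \<xi>. \<forall>b \<in> vs A g2 \<xi>. (g1 @ a \<in> Lr A \<longleftrightarrow> g2 @ b \<in> Lr A) \<and> resets a = resets b)"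
    and "rc_equiv A g1 x"
  shows "rc_equiv A g2 x"
  unfolding rc_equiv_def
proof (intro allI ballI)
  fix \<xi> b c assume b: "b \<in> vs A g2 \<xi>" and c: "c \<in> vs A x \<xi>"
  obtain a where a: "a \<in> vs A g1 \<xi>" using assms(1)[of \<xi>] b by blast
  have "(g1 @ a \<in> Lr A \<longleftrightarrow> x @ c \<in> Lr A) \<and> resets a = resets c" using assms(2) a c unfolding rc_equiv_def by blast
  moreover have "(g1 @ a \<in> Lr A \<longleftrightarrow> g2 @ b \<in> Lr A) \<and> resets a = resets b" using assms(1)[of \<xi>] a b by blast
  ultimately show "(g2 @ b \<in> Lr A \<longleftrightarrow> x @ c \<in> Lr A) \<and> resets b = resets c" by metis
qed

lemma same_key:
  fixes A :: "('s::finite, 'c::finite, 'l) ta"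
  assumes dta: "is_DTA A" and k: "key A g1 = key A g2"
  shows "rc_equiv A g1 x \<longleftrightarrow> rc_equiv A g2 x"
proof (cases "valid_rc A g1")
  case False
  hence "\<not> valid_rc A g2" using k unfolding key_def by (auto split: if_splits)
  hence "rc_equiv A g1 x" "rc_equiv A g2 x" using False vs_invalid unfolding rc_equiv_def by blast+
  thus ?thesis by blast
next
  case True
  hence v2: "valid_rc A g2" using k unfolding key_def by (auto split: if_splits)
  obtain w1 ts1 l1 where r1: "runp A (init A) (\<lambda>_. 0) w1 ts1 g1 l1" using True unfolding valid_rc_def by blast
  obtain w2 ts2 l2 where r2: "runp A (init A) (\<lambda>_. 0) w2 ts2 g2 l2" using v2 unfolding valid_rc_def by blast
  have eq: "endloc A g1 = endloc A g2" "rdata A (endval (\<lambda>_. 0) g1) = rdata A (endval (\<lambda>_. 0) g2)"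
    using k True v2 unfolding key_def by auto
  have "l1 = l2" using eq(1) endloc_eq[OF dta r1] endloc_eq[OF dta r2] by simp
  hence r2': "runp A (init A) (\<lambda>_. 0) w2 ts2 g2 l1" using r2 by simp
  show ?thesis
    using rc_transfer[OF compat[OF dta r1 r2' eq(2)]] rc_transfer[OF compat[OF dta r2' r1 eq(2)[symmetric]]]
    by blast
qed

lemma run_locs:
  "runp A l \<nu> w ts g l' \<Longrightarrow> wf_ta A \<Longrightarrow> l \<in> locs A \<Longrightarrow> l' \<in> locs A"
proof (induction rule: runp.induct)
  case (run_nil l \<nu>) thus ?case by simp
next
  case (run_step l \<sigma> \<phi> B l'' t v \<nu> w ts \<gamma> l')
  have "l'' \<in> locs A" using run_step.hyps(1) run_step.prems(1) unfolding wf_ta_def by blast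
  thus ?case using run_step.IH run_step.prems by blast
qed

lemma run_nonneg:
  "runp A l \<nu> w ts g l' \<Longrightarrow> \<forall>c. \<nu> c \<ge> 0 \<Longrightarrow> \<forall>c. endval \<nu> g c \<ge> 0"
proof (induction rule: runp.induct)
  case (run_nil l \<nu>) thus ?case by simp
next
  case (run_step l \<sigma> \<phi> B l'' t v \<nu> w ts \<gamma> l')
  have "\<forall>c. (if c \<in> B then 0 else v c) \<ge> 0" using run_step.hyps(2,3) run_step.prems by simp
  thus ?case using run_step.IH by simp
qed

lemma rdata_finite:
  fixes A :: "('s, 'c::finite, 'l) ta"
  shows "finite (rdata A ` {\<nu>. \<forall>c. \<nu> c \<ge> 0})"
proof -
  define K where "K = \<lfloor>Max (range (kappa A))\<rfloor>"
  define F where "F = {f :: 'c \<Rightarrow> int option. \<forall>x. (x \<in> UNIV \<longrightarrow> f x \<in> insert None (Some ` {0..K})) \<and> (x \<notin> UNIV \<longrightarrow> f x = None)}"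
  have finF: "finite F" unfolding F_def by (rule finite_set_of_finite_funs) auto
  have "rdata A ` {\<nu>. \<forall>c. \<nu> c \<ge> 0} \<subseteq> F \<times> UNIV"
  proof
    fix p assume "p \<in> rdata A ` {\<nu>. \<forall>c. \<nu> c \<ge> 0}"
    then obtain \<nu> where nn: "\<forall>c. \<nu> c \<ge> 0" and p: "p = rdata A \<nu>" by blast
    have "(\<lambda>c. if \<nu> c \<le> kappa A c then Some \<lfloor>\<nu> c\<rfloor> else None) \<in> F"
      unfolding F_def
    proof (intro CollectI allI conjI impI)
      fix c :: 'c assume "c \<in> UNIV"
      show "(if \<nu> c \<le> kappa A c then Some \<lfloor>\<nu> c\<rfloor> else None) \<in> insert None (Some ` {0..K})"
      proof (cases "\<nu> c \<le> kappa A c")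
        case True
        have "kappa A c \<le> Max (range (kappa A))" by (rule Max_ge) auto
        hence "\<lfloor>\<nu> c\<rfloor> \<le> K" unfolding K_def using True by (meson floor_mono order.trans)
        moreover have "0 \<le> \<lfloor>\<nu> c\<rfloor>" using nn by simp
        ultimately show ?thesis using True by auto
      qed simp
    qed simp
    thus "p \<in> F \<times> UNIV" unfolding p rdata_def by simp
  qed
  moreover have "finite (F \<times> (UNIV :: (('c \<Rightarrow> bool) \<times> ('c \<Rightarrow> 'c \<Rightarrow> bool)) set))" using finF by simp
  ultimately show ?thesis by (rule finite_subset)
qed

lemma key_finite:
  fixes A :: "('s::finite, 'c::finite, 'l) ta"
  assumes dta: "is_DTA A"
  shows "finite (range (key A))"
proof -
  have wf: "wf_ta A" using dta unfolding is_DTA_def by blast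
  have "range (key A) \<subseteq> insert None (Some ` (locs A \<times> rdata A ` {\<nu>. \<forall>c. \<nu> c \<ge> 0}))"
  proof clarify
    fix g assume ne: "key A g \<notin> Some ` (locs A \<times> rdata A ` {\<nu>. \<forall>c. 0 \<le> \<nu> c})"
    show "key A g = None"
    proof (rule ccontr)
      assume "key A g \<noteq> None"
      hence v: "valid_rc A g" unfolding key_def by (auto split: if_splits)
      then obtain w ts l where r: "runp A (init A) (\<lambda>_. 0) w ts g l" unfolding valid_rc_def by blast
      have "endloc A g \<in> locs A" using endloc_eq[OF dta r] run_locs[OF r wf] wf unfolding wf_ta_def by simp
      moreover have "\<forall>c. endval (\<lambda>_. 0) g c \<ge> 0" using run_nonneg[OF r] by simp
      ultimately show False using ne v unfolding key_def by auto
    qed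
  qed
  moreover have "finite (insert None (Some ` (locs A \<times> rdata A ` {\<nu>. \<forall>c. \<nu> c \<ge> 0})))"
    using wf rdata_finite[of A] unfolding wf_ta_def by simp
  ultimately show ?thesis by (rule finite_subset)
qed

theorem theorem3p10:
  fixes A :: "('s::finite, 'c::finite, 'l) ta"
  assumes "is_DTA A"
  shows "finite (UNIV // {(\<gamma>1, \<gamma>2). rc_equiv A \<gamma>1 \<gamma>2})"
proof -
  let ?r = "{(\<gamma>1, \<gamma>2). rc_equiv A \<gamma>1 \<gamma>2}"
  have "UNIV // ?r \<subseteq> (\<lambda>k. ?r `` {SOME g. key A g = k}) ` range (key A)"
  proof
    fix X assume "X \<in> UNIV // ?r"
    then obtain x where X: "X = ?r `` {x}" unfolding quotient_def by blast
    define g where "g = (SOME g. key A g = key A x)"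
    have kg: "key A g = key A x" unfolding g_def by (rule someI) (rule refl)
    have "?r `` {x} = ?r `` {g}" using same_key[OF assms kg] by auto
    thus "X \<in> (\<lambda>k. ?r `` {SOME g. key A g = k}) ` range (key A)" unfolding X g_def by blast
  qed
  moreover have "finite ((\<lambda>k. ?r `` {SOME g. key A g = k}) ` range (key A))"
    using key_finite[OF assms] by simp
  ultimately show ?thesis by (rule finite_subset)
qed

end
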